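(* Let $\Omega\subset\mathbb{P}(\mathbb{R}^d)$ be a properly convex domain and $S\subset\Omega$ a properly embedded simplex. If $g\in\mathrm{Aut}(\Omega)$ fixes every vertex of $S$, then $S\subset\mathrm{Min}(g)$.
   Context: Properly convex domain: open subset of $\mathbb{P}(\mathbb{R}^d)$ which is a bounded convex set in some affine chart. Simplex: $S$ with $hS=\{[x_1:\dots:x_k:0:\dots:0]:x_i>0\}$ for some $h\in\mathrm{PGL}_d(\mathbb{R})$, $1\le k\le d$, vertices $h^{-1}[e_1],\dots,h^{-1}[e_k]$. Properly embedded: the inclusion $S\hookrightarrow\Omega$ is proper. Hilbert metric $H_\Omega(x,y)=\frac12\log\frac{|x-b||y-a|}{|x-a||y-b|}$ ($a,b$ boundary points on the line through $x,y$ ordered $a,x,y,b$). $\tau_\Omega(g)=\inf_{x\in\Omega}H_\Omega(x,gx)$ and $\mathrm{Min}(g)=\{x\in\Omega:H_\Omega(x,gx)=\tau_\Omega(g)\}$. *)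

theory Defs
  imports "HOL-Analysis.Analysis"
begin

text \<open>A point of the projective space P(R^d) is the line spanned by a
nonzero vector of R^d = real^'n. A subset of P(R^d) is represented by its cone:
the set of all nonzero vectors whose line lies in the subset (closed under
multiplication by nonzero scalars). Projective maps (elements of PGL_d) are
represented by invertible matrices.\<close>

definition pcone :: "(real^'n) set \<Rightarrow> bool" where
  "pcone A \<longleftrightarrow> 0 \<notin> A \<and> (\<forall>x\<in>A. \<forall>c. c \<noteq> 0 \<longrightarrow> c *\<^sub>R x \<in> A)"

text \<open>A projective set is compact iff its trace on the unit sphere is compact
(the sphere double covers P(R^d)).\<close>
definition pcompact :: "(real^'n) set \<Rightarrow> bool" where
  "pcompact K \<longleftrightarrow> compact (K \<inter> sphere 0 1)"

text \<open>The affine chart {[x] : a.x \<noteq> 0}, identified with the affine hyperplane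
a.x = 1, in which the set is a bounded convex set.\<close>
definition good_chart :: "(real^'n) set \<Rightarrow> real^'n \<Rightarrow> bool" where
  "good_chart \<Omega> a \<longleftrightarrow> (\<forall>x\<in>\<Omega>. a \<bullet> x \<noteq> 0) \<and>
      bounded {x\<in>\<Omega>. a \<bullet> x = 1} \<and> convex {x\<in>\<Omega>. a \<bullet> x = 1}"

definition properly_convex_domain :: "(real^'n) set \<Rightarrow> bool" where
  "properly_convex_domain \<Omega> \<longleftrightarrow> pcone \<Omega> \<and> \<Omega> \<noteq> {} \<and> open \<Omega> \<and> (\<exists>a. good_chart \<Omega> a)"

text \<open>Simplex: h S = {[x_1 : ... : x_k : 0 ... 0] : x_i > 0}; the index set of the
positive coordinates is a nonempty set I of coordinates (up to a permutation
matrix, which is absorbed into h, this is the set of the first k coordinates).\<close>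
definition simplex_of :: "real^'n^'n \<Rightarrow> 'n set \<Rightarrow> (real^'n) set" where
  "simplex_of h I = {c *\<^sub>R (matrix_inv h *v y) | c y.
      c \<noteq> 0 \<and> (\<forall>i\<in>I. y $ i > 0) \<and> (\<forall>i. i \<notin> I \<longrightarrow> y $ i = 0)}"

definition simplex_vertices :: "real^'n^'n \<Rightarrow> 'n set \<Rightarrow> (real^'n) set" where
  "simplex_vertices h I = (\<lambda>i. matrix_inv h *v axis i 1) ` I"

definition properly_embedded :: "(real^'n) set \<Rightarrow> (real^'n) set \<Rightarrow> bool" where
  "properly_embedded S \<Omega> \<longleftrightarrow> S \<subseteq> \<Omega> \<and>
     (\<forall>K. pcone K \<and> K \<subseteq> \<Omega> \<and> pcompact K \<longrightarrow> pcompact (S \<inter> K))"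

text \<open>Hilbert metric, computed in a chart where \<Omega> is bounded and convex
(the value does not depend on the chart). For x \<noteq> y in the chart,
p and q are the boundary points with p, x, y, q in this order.\<close>
definition hilbert_dist :: "(real^'n) set \<Rightarrow> real^'n \<Rightarrow> real^'n \<Rightarrow> real" where
  "hilbert_dist \<Omega> x y =
    (let a = (SOME a. good_chart \<Omega> a);
         D = {z\<in>\<Omega>. a \<bullet> z = 1};
         x' = (1 / (a \<bullet> x)) *\<^sub>R x;
         y' = (1 / (a \<bullet> y)) *\<^sub>R y
     in if x' = y' then 0 else
       (let s = Sup {s. s \<ge> 0 \<and> x' + s *\<^sub>R (x' - y') \<in> D};
            t = Sup {t. t \<ge> 0 \<and> y' + t *\<^sub>R (y' - x') \<in> D};
            p = x' + s *\<^sub>R (x' - y');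
            q = y' + t *\<^sub>R (y' - x')
        in (1/2) * ln ((dist x' q * dist y' p) / (dist x' p * dist y' q))))"

definition is_automorphism :: "(real^'n) set \<Rightarrow> real^'n^'n \<Rightarrow> bool" where
  "is_automorphism \<Omega> g \<longleftrightarrow> invertible g \<and> (\<lambda>x. g *v x) ` \<Omega> = \<Omega>"

definition translation_length :: "(real^'n) set \<Rightarrow> real^'n^'n \<Rightarrow> real" where
  "translation_length \<Omega> g = (INF x\<in>\<Omega>. hilbert_dist \<Omega> x (g *v x))"

definition Min_set :: "(real^'n) set \<Rightarrow> real^'n^'n \<Rightarrow> (real^'n) set" where
  "Min_set \<Omega> g = {x\<in>\<Omega>. hilbert_dist \<Omega> x (g *v x) = translation_length \<Omega> g}"

end

theory Submission
  imports Defs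
begin


lemma cone_scale:
  assumes "pcone \<Omega>" "x \<in> \<Omega>" "c \<noteq> 0" shows "c *\<^sub>R x \<in> \<Omega>"
  using assms unfolding pcone_def by blast

lemma cone_add:
  fixes \<Omega> :: "(real^'n) set"
  assumes "pcone \<Omega>" "good_chart \<Omega> a" "x \<in> \<Omega>" "a \<bullet> x > 0" "z \<in> \<Omega>" "a \<bullet> z > 0"
  shows "x + z \<in> \<Omega>"
proof -
  let ?D = "{x\<in>\<Omega>. a \<bullet> x = 1}"
  have cv: "convex ?D" using assms(2) unfolding good_chart_def by blast
  have x1: "(1/(a\<bullet>x)) *\<^sub>R x \<in> ?D" using assms cone_scale[of \<Omega> x "1/(a\<bullet>x)"] by auto
  have z1: "(1/(a\<bullet>z)) *\<^sub>R z \<in> ?D" using assms cone_scale[of \<Omega> z "1/(a\<bullet>z)"] by auto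
  define u where "u = (a\<bullet>x) / (a\<bullet>x + a\<bullet>z)"
  define v where "v = (a\<bullet>z) / (a\<bullet>x + a\<bullet>z)"
  have sp: "a\<bullet>x + a\<bullet>z > 0" using assms by simp
  have uv: "u \<ge> 0" "v \<ge> 0" "u + v = 1" using assms sp unfolding u_def v_def by (auto simp: add_divide_distrib[symmetric])
  have "u *\<^sub>R ((1/(a\<bullet>x)) *\<^sub>R x) + v *\<^sub>R ((1/(a\<bullet>z)) *\<^sub>R z) \<in> ?D"
    using convexD[OF cv x1 z1 uv] .
  moreover have "u *\<^sub>R ((1/(a\<bullet>x)) *\<^sub>R x) + v *\<^sub>R ((1/(a\<bullet>z)) *\<^sub>R z) = (1/(a\<bullet>x + a\<bullet>z)) *\<^sub>R (x + z)"
    using assms unfolding u_def v_def by (simp add: scaleR_add_right)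
  ultimately have "(1/(a\<bullet>x + a\<bullet>z)) *\<^sub>R (x + z) \<in> \<Omega>" by (metis (no_types, lifting) mem_Collect_eq)
  from cone_scale[OF assms(1) this, of "a\<bullet>x + a\<bullet>z"] assms show ?thesis by simp
qed

lemma chart_nz: "good_chart \<Omega> a \<Longrightarrow> x \<in> \<Omega> \<Longrightarrow> a \<bullet> x \<noteq> 0"
  unfolding good_chart_def by blast

lemma key_lemma:
  fixes \<Omega> :: "(real^'n) set" and T :: "real^'n \<Rightarrow> real^'n"
  assumes pc: "pcone \<Omega>" and gc: "good_chart \<Omega> a" and op: "open \<Omega>"
    and lin: "linear T"
    and TC: "\<And>x. x \<in> \<Omega> \<Longrightarrow> a \<bullet> x > 0 \<Longrightarrow> T x \<in> \<Omega> \<and> a \<bullet> T x > 0"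
    and ev: "T v = \<mu> *\<^sub>R v" and av: "a \<bullet> v > 0"
    and y: "y \<in> \<Omega>" "a \<bullet> y > 0" and r: "r > 0"
    and yr: "y - r *\<^sub>R T y \<in> \<Omega>" "a \<bullet> (y - r *\<^sub>R T y) > 0"
  shows "r * \<mu> \<le> 1"
proof (rule ccontr)
  assume "\<not> r * \<mu> \<le> 1"
  hence rm: "r * \<mu> > 1" by simp
  obtain e where e: "e > 0" "ball y e \<subseteq> \<Omega>" using op y(1) open_contains_ball by blast
  define \<epsilon> where "\<epsilon> = min (e / (2 * (norm v + 1))) ((a \<bullet> y) / (2 * (a \<bullet> v)))"
  have "2 * norm v + 2 > 0" by (smt (verit) norm_ge_zero)
  hence \<epsilon>pos: "\<epsilon> > 0" using e av y unfolding \<epsilon>_def by (auto intro!: divide_pos_pos simp: add_pos_nonneg)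
  have "\<epsilon> \<le> e / (2 * (norm v + 1))" unfolding \<epsilon>_def by simp
  hence "norm (\<epsilon> *\<^sub>R v) \<le> e / (2 * (norm v + 1)) * norm v"
  proof -
    have "norm (\<epsilon> *\<^sub>R v) = \<epsilon> * norm v" using \<epsilon>pos by simp
    also have "\<dots> \<le> e / (2 * (norm v + 1)) * norm v" using \<open>\<epsilon> \<le> _\<close> by (rule mult_right_mono) simp
    finally show ?thesis .
  qed
  also have "\<dots> < e"
  proof -
    have d: "2*(norm v+1) > 0" by (simp add: add_nonneg_pos)
    have "e * norm v < e * (2*(norm v+1))" using e(1) by (intro mult_strict_left_mono) (auto simp: add_nonneg_pos)
    hence "(e * norm v) / (2*(norm v+1)) < e" using d by (simp add: pos_divide_less_eq)
    thus ?thesis by simp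
  qed
  finally have "y - \<epsilon> *\<^sub>R v \<in> ball y e" by (simp add: dist_norm)
  hence b0: "y - \<epsilon> *\<^sub>R v \<in> \<Omega>" using e by blast
  have "\<epsilon> * (a \<bullet> v) \<le> (a \<bullet> y) / (2 * (a \<bullet> v)) * (a \<bullet> v)"
    unfolding \<epsilon>_def using av by (intro mult_right_mono) auto
  hence a0: "a \<bullet> (y - \<epsilon> *\<^sub>R v) > 0" using av y by (simp add: inner_diff_right)
  have ind: "y - ((r*\<mu>)^n * \<epsilon>) *\<^sub>R v \<in> \<Omega> \<and> a \<bullet> (y - ((r*\<mu>)^n * \<epsilon>) *\<^sub>R v) > 0" for n
  proof (induction n)
    case 0 then show ?case using b0 a0 by simp
  next
    case (Suc n)
    define K where "K = (r*\<mu>)^n * \<epsilon>"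
    have "T (y - K *\<^sub>R v) \<in> \<Omega> \<and> a \<bullet> T (y - K *\<^sub>R v) > 0" using TC Suc unfolding K_def by blast
    moreover have "T (y - K *\<^sub>R v) = T y - (K*\<mu>) *\<^sub>R v"
      using lin ev by (simp add: linear_diff linear_cmul)
    ultimately have h1: "T y - (K*\<mu>) *\<^sub>R v \<in> \<Omega>" "a \<bullet> (T y - (K*\<mu>) *\<^sub>R v) > 0" by auto
    have h2: "r *\<^sub>R (T y - (K*\<mu>) *\<^sub>R v) \<in> \<Omega>" using cone_scale[OF pc h1(1)] r by simp
    have h3: "a \<bullet> (r *\<^sub>R (T y - (K*\<mu>) *\<^sub>R v)) > 0" using h1(2) r by simp
    have "(y - r *\<^sub>R T y) + r *\<^sub>R (T y - (K*\<mu>) *\<^sub>R v) \<in> \<Omega>"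
      by (rule cone_add[OF pc gc yr h2 h3])
    moreover have "(y - r *\<^sub>R T y) + r *\<^sub>R (T y - (K*\<mu>) *\<^sub>R v) = y - ((r*\<mu>)^Suc n * \<epsilon>) *\<^sub>R v"
      unfolding K_def by (simp add: algebra_simps)
    moreover have "a \<bullet> ((y - r *\<^sub>R T y) + r *\<^sub>R (T y - (K*\<mu>) *\<^sub>R v)) > 0"
      using yr(2) h3 by (simp add: inner_add_right)
    ultimately show ?case by metis
  qed
  obtain n where n: "(a \<bullet> y) / (\<epsilon> * (a \<bullet> v)) < (r*\<mu>)^n" using real_arch_pow[OF rm] by blast
  have "a \<bullet> y > (r*\<mu>)^n * \<epsilon> * (a \<bullet> v)" using ind[of n] by (simp add: inner_diff_right)
  with n \<epsilon>pos av show False by (simp add: field_simps)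
qed



lemma frac_le_iff: "(s::real) \<ge> 0 \<Longrightarrow> c < 1 \<Longrightarrow> (s/(1+s) \<le> c) = (s \<le> c/(1-c))"
  by (auto simp: field_simps)

lemma frac_less_iff: "(s::real) \<ge> 0 \<Longrightarrow> c < 1 \<Longrightarrow> (s/(1+s) < c) = (s < c/(1-c))"
  by (auto simp: field_simps)

lemma LB_sup:
  fixes X :: "real set"
  assumes bdd: "bdd_above X" and ne: "X \<noteq> {}" and S: "Sup X > 0" and c: "c > 0"
    and nn: "\<forall>s\<in>X. s \<ge> 0" and le: "\<forall>s\<in>X. s/(1+s) \<le> c"
  shows "(1 + Sup X)/Sup X \<ge> 1/c"
proof (cases "c \<ge> 1")
  case True
  have "(1 + Sup X)/Sup X = 1 + 1/Sup X" using S by (simp add: field_simps)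
  also have "\<dots> \<ge> 1" using S by simp
  moreover have "1/c \<le> 1" using True by simp
  ultimately show ?thesis by linarith
next
  case False
  hence c1: "c < 1" by simp
  have "\<forall>s\<in>X. s \<le> c/(1-c)" using le nn frac_le_iff[OF _ c1] by blast
  hence "Sup X \<le> c/(1-c)" using ne by (intro cSup_least) auto
  hence "1/(c/(1-c)) \<le> 1/Sup X" using S by (intro divide_left_mono) (auto simp: c c1)
  hence "(1-c)/c \<le> 1/Sup X" by simp
  hence "1 + (1-c)/c \<le> 1 + 1/Sup X" by simp
  moreover have "1 + (1-c)/c = 1/c" using c by (simp add: field_simps)
  moreover have "(1 + Sup X)/Sup X = 1 + 1/Sup X" using S by (simp add: field_simps)
  ultimately show ?thesis by simp
qed

lemma UB_sup:
  fixes X :: "real set"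
  assumes bdd: "bdd_above X" and c: "c > 0" and z: "0 \<in> X"
    and inX: "\<And>s. s \<ge> 0 \<Longrightarrow> s/(1+s) < c \<Longrightarrow> s \<in> X"
  shows "c < 1" "(1 + Sup X)/Sup X \<le> 1/c"
proof -
  show c1: "c < 1"
  proof (rule ccontr)
    assume "\<not> c < 1"
    hence "\<And>s. s \<ge> 0 \<Longrightarrow> s \<in> X" using inX by (smt (verit) divide_less_eq_1 le_add_same_cancel2)
    moreover obtain B where "\<forall>x\<in>X. x \<le> B" using bdd by (auto simp: bdd_above_def)
    ultimately show False by (metis add_le_same_cancel1 max.cobounded1 max.coboundedI2 not_one_le_zero order_trans)
  qed
  have S0: "Sup X \<ge> 0" using z bdd by (intro cSup_upper)
  have Sge: "Sup X \<ge> c/(1-c)"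
  proof (rule ccontr)
    assume "\<not> Sup X \<ge> c/(1-c)"
    hence lt: "Sup X < c/(1-c)" by simp
    define s' where "s' = (Sup X + c/(1-c))/2"
    define k where "k = c/(1-c)"
    have "s' \<ge> 0" using S0 lt unfolding s'_def k_def[symmetric] by (simp add: field_simps)
    moreover have "s' < c/(1-c)" using S0 lt unfolding s'_def k_def[symmetric] by (simp add: field_simps)
    ultimately have "s' \<ge> 0" "s' < c/(1-c)" by auto
    hence "s' \<in> X" using inX frac_less_iff[OF _ c1] by blast
    hence "s' \<le> Sup X" using bdd by (intro cSup_upper)
    thus False using lt unfolding s'_def k_def[symmetric] by (simp add: field_simps)
  qed
  have cc: "c/(1-c) > 0" using c c1 by simp
  hence Sp: "Sup X > 0" using Sge by linarith
  have "1/Sup X \<le> 1/(c/(1-c))"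
  proof -
    define k where "k = c/(1-c)"
    have "0 < Sup X * k" using Sp cc unfolding k_def by (intro mult_pos_pos)
    thus ?thesis using Sge unfolding k_def[symmetric] by (intro divide_left_mono) auto
  qed
  hence "1/Sup X \<le> (1-c)/c" by simp
  moreover have "1 + (1-c)/c = 1/c" using c by (simp add: field_simps)
  moreover have "(1 + Sup X)/Sup X = 1 + 1/Sup X" using Sp by (simp add: field_simps)
  ultimately show "(1 + Sup X)/Sup X \<le> 1/c" by simp
qed

lemma hd_scale1: "c \<noteq> 0 \<Longrightarrow> hilbert_dist \<Omega> (c *\<^sub>R x) y = hilbert_dist \<Omega> x y"
proof -
  assume c: "c \<noteq> 0"
  have e: "\<And>a::real^'a. (1 / (a \<bullet> (c *\<^sub>R x))) *\<^sub>R (c *\<^sub>R x) = (1 / (a \<bullet> x)) *\<^sub>R x"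
    using c by simp
  show ?thesis by (simp only: hilbert_dist_def e)
qed

lemma hd_scale2: "c \<noteq> 0 \<Longrightarrow> hilbert_dist \<Omega> x (c *\<^sub>R y) = hilbert_dist \<Omega> x y"
proof -
  assume c: "c \<noteq> 0"
  have e: "\<And>a::real^'a. (1 / (a \<bullet> (c *\<^sub>R y))) *\<^sub>R (c *\<^sub>R y) = (1 / (a \<bullet> y)) *\<^sub>R y"
    using c by simp
  show ?thesis by (simp only: hilbert_dist_def e)
qed

lemma X_props:
  fixes \<Omega> :: "(real^'n) set"
  assumes gc: "good_chart \<Omega> a" and op: "open \<Omega>" and P: "P \<in> \<Omega>" "a \<bullet> P = 1" and Q: "a \<bullet> Q = 1"
    and PQ: "P \<noteq> Q"
    and X: "X = {s. s \<ge> 0 \<and> P + s *\<^sub>R (P - Q) \<in> {z\<in>\<Omega>. a \<bullet> z = 1}}"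
  shows "bdd_above X" "0 \<in> X" "Sup X > 0" "\<forall>s\<in>X. s \<ge> 0"
proof -
  have nz: "norm (P - Q) > 0" using PQ by simp
  show z: "0 \<in> X" using X P by simp
  show "\<forall>s\<in>X. s \<ge> 0" using X by simp
  obtain B where B: "\<forall>z\<in>{z\<in>\<Omega>. a \<bullet> z = 1}. norm z \<le> B"
    using gc unfolding good_chart_def bounded_iff by blast
  have "\<forall>s\<in>X. s \<le> 2*B / norm (P - Q)"
  proof
    fix s assume s: "s \<in> X"
    hence "norm (P + s *\<^sub>R (P - Q)) \<le> B" "s \<ge> 0" using B X by auto
    moreover have "norm P \<le> B" using B P by auto
    moreover have "norm (s *\<^sub>R (P - Q)) \<le> norm (P + s *\<^sub>R (P - Q)) + norm P"
      by (metis add_diff_cancel_left' norm_triangle_ineq4)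
    ultimately have "s * norm (P - Q) \<le> 2*B" by simp
    thus "s \<le> 2*B / norm (P - Q)" using nz by (simp add: pos_le_divide_eq)
  qed
  thus bdd: "bdd_above X" by (auto simp: bdd_above_def)
  obtain e where e: "e > 0" "ball P e \<subseteq> \<Omega>" using op P(1) open_contains_ball by blast
  define s where "s = e / (2 * norm (P - Q))"
  have s0: "s > 0" using e nz unfolding s_def by simp
  have "norm (s *\<^sub>R (P - Q)) = e/2" using s0 nz e(1) unfolding s_def by simp
  hence "P + s *\<^sub>R (P - Q) \<in> ball P e" using e by (simp add: dist_norm)
  hence "P + s *\<^sub>R (P - Q) \<in> \<Omega>" using e by blast
  moreover have "a \<bullet> (P + s *\<^sub>R (P - Q)) = 1" using P Q by (simp add: inner_add_right inner_diff_right)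
  ultimately have "s \<in> X" using X s0 by simp
  hence "s \<le> Sup X" using bdd by (intro cSup_upper)
  thus "Sup X > 0" using s0 by simp
qed

lemma hd_formula:
  fixes \<Omega> :: "(real^'n) set"
  assumes a: "a = (SOME a. good_chart \<Omega> a)"
    and P: "P = (1 / (a \<bullet> x)) *\<^sub>R x" and Q: "Q = (1 / (a \<bullet> z)) *\<^sub>R z" and PQ: "P \<noteq> Q"
    and X1: "X1 = {s. s \<ge> 0 \<and> P + s *\<^sub>R (P - Q) \<in> {z\<in>\<Omega>. a \<bullet> z = 1}}"
    and X2: "X2 = {t. t \<ge> 0 \<and> Q + t *\<^sub>R (Q - P) \<in> {z\<in>\<Omega>. a \<bullet> z = 1}}"
    and s: "Sup X1 > 0" and t: "Sup X2 > 0"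
  shows "hilbert_dist \<Omega> x z = 1/2 * ln ((1 + Sup X1)/Sup X1 * ((1 + Sup X2)/Sup X2))"
proof -
  define s t where "s = Sup X1" and "t = Sup X2"
  have h: "hilbert_dist \<Omega> x z = 1/2 * ln ((dist P (Q + t *\<^sub>R (Q - P)) * dist Q (P + s *\<^sub>R (P - Q)))
             / (dist P (P + s *\<^sub>R (P - Q)) * dist Q (Q + t *\<^sub>R (Q - P))))"
    unfolding hilbert_dist_def Let_def a[symmetric] P[symmetric] Q[symmetric] s_def t_def X1 X2
    using PQ by simp
  have n: "norm (P - Q) > 0" using PQ by simp
  have "dist P (Q + t *\<^sub>R (Q - P)) = (1 + t) * norm (P - Q)"
  proof -
    have "P - (Q + t *\<^sub>R (Q - P)) = (1 + t) *\<^sub>R (P - Q)" by (simp add: algebra_simps)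
    thus ?thesis using t unfolding t_def dist_norm by simp
  qed
  moreover have "dist Q (P + s *\<^sub>R (P - Q)) = (1 + s) * norm (P - Q)"
  proof -
    have "Q - (P + s *\<^sub>R (P - Q)) = -((1 + s) *\<^sub>R (P - Q))" by (simp add: algebra_simps)
    thus ?thesis using s unfolding s_def dist_norm by (simp only: norm_minus_cancel) simp
  qed
  moreover have "dist P (P + s *\<^sub>R (P - Q)) = s * norm (P - Q)"
    using s unfolding s_def dist_norm by simp
  moreover have "dist Q (Q + t *\<^sub>R (Q - P)) = t * norm (P - Q)"
    using t unfolding t_def dist_norm by (simp add: norm_minus_commute)
  ultimately have "hilbert_dist \<Omega> x z = 1/2 * ln (((1+t) * norm (P - Q)) * ((1+s) * norm (P - Q)) / ((s * norm (P - Q)) * (t * norm (P - Q))))"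
    using h by simp
  also have "((1+t) * norm (P - Q)) * ((1+s) * norm (P - Q)) / ((s * norm (P - Q)) * (t * norm (P - Q))) = (1 + s)/s * ((1+t)/t)"
    using n s t unfolding s_def[symmetric] t_def[symmetric] by (simp add: field_simps)
  finally show ?thesis unfolding s_def t_def .
qed



lemma hd_same:
  assumes "(1 / ((SOME a. good_chart \<Omega> a) \<bullet> x)) *\<^sub>R x = (1 / ((SOME a. good_chart \<Omega> a) \<bullet> z)) *\<^sub>R z"
  shows "hilbert_dist \<Omega> x z = 0"
  using assms unfolding hilbert_dist_def Let_def by simp

lemma LOW:
  fixes \<Omega> :: "(real^'n) set" and T Ti :: "real^'n \<Rightarrow> real^'n"
  assumes a: "a = (SOME a. good_chart \<Omega> a)"
    and pc: "pcone \<Omega>" and gc: "good_chart \<Omega> a" and op: "open \<Omega>"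
    and lin: "linear T" and lini: "linear Ti"
    and TC: "\<And>x. x \<in> \<Omega> \<Longrightarrow> a \<bullet> x > 0 \<Longrightarrow> T x \<in> \<Omega> \<and> a \<bullet> T x > 0"
    and TiC: "\<And>x. x \<in> \<Omega> \<Longrightarrow> a \<bullet> x > 0 \<Longrightarrow> Ti x \<in> \<Omega> \<and> a \<bullet> Ti x > 0"
    and inv1: "\<And>x. Ti (T x) = x"
    and vM: "T vM = M *\<^sub>R vM" "a \<bullet> vM > 0" and vm: "T vm = m *\<^sub>R vm" "a \<bullet> vm > 0"
    and Mm: "M > 0" "m > 0"
    and y: "y \<in> \<Omega>" "a \<bullet> y > 0"
  shows "hilbert_dist \<Omega> y (T y) \<ge> 1/2 * ln (M/m)"
proof -
  have vmi: "Ti vm = (1/m) *\<^sub>R vm"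
  proof -
    have "vm = Ti (m *\<^sub>R vm)" using inv1[of vm] vm by simp
    also have "\<dots> = m *\<^sub>R Ti vm" using lini by (simp add: linear_cmul)
    finally have e: "vm = m *\<^sub>R Ti vm" .
    have "(1/m) *\<^sub>R (m *\<^sub>R Ti vm) = Ti vm" using Mm by simp
    thus ?thesis using e by metis
  qed
  define \<alpha> \<beta> where "\<alpha> = a \<bullet> y" and "\<beta> = a \<bullet> T y"
  have Ty: "T y \<in> \<Omega>" "\<beta> > 0" using TC[OF y] unfolding \<beta>_def by auto
  have al: "\<alpha> > 0" using y unfolding \<alpha>_def by simp
  define P Q where "P = (1/\<alpha>) *\<^sub>R y" and "Q = (1/\<beta>) *\<^sub>R T y"
  show ?thesis
  proof (cases "P = Q")
    case True
    hence h0: "hilbert_dist \<Omega> y (T y) = 0" using hd_same[of \<Omega> y "T y"]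
      unfolding P_def Q_def \<alpha>_def \<beta>_def a by simp
    define \<mu> where "\<mu> = \<beta>/\<alpha>"
    have mu: "\<mu> > 0" using al Ty unfolding \<mu>_def by simp
    have Tyy: "T y = \<mu> *\<^sub>R y"
    proof -
      have "T y = \<beta> *\<^sub>R Q" using Ty unfolding Q_def by simp
      also have "\<dots> = \<beta> *\<^sub>R P" using True by simp
      finally show ?thesis unfolding P_def \<mu>_def by simp
    qed
    have Tiy: "Ti y = (1/\<mu>) *\<^sub>R y"
    proof -
      have "y = Ti (\<mu> *\<^sub>R y)" using inv1[of y] Tyy by simp
      also have "\<dots> = \<mu> *\<^sub>R Ti y" using lini by (simp add: linear_cmul)
      finally have e: "y = \<mu> *\<^sub>R Ti y" .
      have "(1/\<mu>) *\<^sub>R (\<mu> *\<^sub>R Ti y) = Ti y" using mu by simp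
      thus ?thesis using e by metis
    qed
    have M1: "M \<le> \<mu>"
    proof (rule ccontr)
      assume "\<not> M \<le> \<mu>"
      hence lt: "\<mu> < M" by simp
      define r where "r = 2/(M+\<mu>)"
      have r0: "r > 0" using Mm mu unfolding r_def by simp
      have "1 - r*\<mu> = (M - \<mu>)/(M+\<mu>)" unfolding r_def using Mm mu by (simp add: field_simps)
      hence cpos: "1 - r*\<mu> > 0" using lt Mm mu by simp
      have eq: "y - r *\<^sub>R T y = (1 - r*\<mu>) *\<^sub>R y" using Tyy by (simp add: algebra_simps)
      have "y - r *\<^sub>R T y \<in> \<Omega>" unfolding eq using cone_scale[OF pc y(1)] cpos by simp
      moreover have "a \<bullet> (y - r *\<^sub>R T y) > 0" unfolding eq using cpos y by simp
      ultimately have "r * M \<le> 1" using key_lemma[OF pc gc op lin TC vM y r0] by blast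
      moreover have "r * M > 1" unfolding r_def using lt Mm mu by (simp add: field_simps)
      ultimately show False by simp
    qed
    have m1: "\<mu> \<le> m"
    proof (rule ccontr)
      assume "\<not> \<mu> \<le> m"
      hence lt: "m < \<mu>" by simp
      define r where "r = (m+\<mu>)/2"
      have r0: "r > 0" using Mm mu unfolding r_def by simp
      have cpos: "1 - r*(1/\<mu>) > 0" using lt Mm mu unfolding r_def by (simp add: field_simps)
      have eq: "y - r *\<^sub>R Ti y = (1 - r*(1/\<mu>)) *\<^sub>R y" using Tiy by (simp add: algebra_simps)
      have "y - r *\<^sub>R Ti y \<in> \<Omega>" unfolding eq using cone_scale[OF pc y(1), of "1 - r*(1/\<mu>)"] cpos by linarith
      moreover have "a \<bullet> (y - r *\<^sub>R Ti y) > 0" unfolding eq using cpos y by simp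
      ultimately have "r * (1/m) \<le> 1" using key_lemma[OF pc gc op lini TiC vmi vm(2) y r0] by blast
      moreover have "r * (1/m) > 1" unfolding r_def using lt Mm mu by (simp add: field_simps)
      ultimately show False by simp
    qed
    have "M/m \<le> 1" using M1 m1 Mm by simp
    hence "ln (M/m) \<le> 0" using Mm by simp
    thus ?thesis using h0 by simp
  next
    case False
    define D where "D = {z\<in>\<Omega>. a \<bullet> z = 1}"
    define X1 where "X1 = {s. s \<ge> 0 \<and> P + s *\<^sub>R (P - Q) \<in> D}"
    define X2 where "X2 = {t. t \<ge> 0 \<and> Q + t *\<^sub>R (Q - P) \<in> D}"
    have PO: "P \<in> \<Omega>" "a \<bullet> P = 1" using cone_scale[OF pc y(1)] al unfolding P_def \<alpha>_def by auto
    have QO: "Q \<in> \<Omega>" "a \<bullet> Q = 1" using cone_scale[OF pc Ty(1)] Ty unfolding Q_def \<beta>_def by auto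
    note X1p = X_props[OF gc op PO QO(2) False X1_def[unfolded D_def]]
    note X2p = X_props[OF gc op QO PO(2) False[symmetric] X2_def[unfolded D_def]]
    have hf: "hilbert_dist \<Omega> y (T y) = 1/2 * ln ((1 + Sup X1)/Sup X1 * ((1 + Sup X2)/Sup X2))"
      by (rule hd_formula[OF a P_def[unfolded \<alpha>_def] Q_def[unfolded \<beta>_def] False
            X1_def[unfolded D_def] X2_def[unfolded D_def] X1p(3) X2p(3)])
    have b1: "(1 + Sup X1)/Sup X1 \<ge> 1/(\<beta>/(\<alpha>*M))"
    proof (rule LB_sup)
      show "bdd_above X1" "X1 \<noteq> {}" "Sup X1 > 0" "\<forall>s\<in>X1. s \<ge> 0" using X1p by auto
      show "\<beta>/(\<alpha>*M) > 0" using al Ty Mm by simp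
      show "\<forall>s\<in>X1. s/(1+s) \<le> \<beta>/(\<alpha>*M)"
      proof
        fix s assume s: "s \<in> X1"
        show "s/(1+s) \<le> \<beta>/(\<alpha>*M)"
        proof (cases "s = 0")
          case True thus ?thesis using al Ty Mm by simp
        next
          case False
          hence s0: "s > 0" using s X1_def by simp
          define r where "r = s*\<alpha>/((1+s)*\<beta>)"
          have r0: "r > 0" using s0 al Ty unfolding r_def by simp
          have eq: "y - r *\<^sub>R T y = (\<alpha>/(1+s)) *\<^sub>R (P + s *\<^sub>R (P - Q))"
          proof -
            have k: "(1/(1+s)) *\<^sub>R y + (s/(1+s)) *\<^sub>R y = y" using s0
              by (simp add: scaleR_add_left[symmetric] add_divide_distrib[symmetric])
            show ?thesis unfolding r_def P_def Q_def using s0 al Ty k by (simp add: algebra_simps field_simps)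
          qed
          have inD: "P + s *\<^sub>R (P - Q) \<in> \<Omega>" "a \<bullet> (P + s *\<^sub>R (P - Q)) = 1" using s X1_def D_def by auto
          have "y - r *\<^sub>R T y \<in> \<Omega>" unfolding eq using cone_scale[OF pc inD(1)] al s0 by simp
          moreover have "a \<bullet> (y - r *\<^sub>R T y) > 0" unfolding eq using inD(2) al s0 by simp
          ultimately have "r * M \<le> 1" using key_lemma[OF pc gc op lin TC vM y r0] by blast
          moreover have "\<beta> + \<beta>* s > 0" "\<alpha>*M > 0" "1+s > 0" using s0 al Ty Mm by (auto intro: add_pos_nonneg)
          ultimately show ?thesis unfolding r_def using s0 al Ty Mm by (simp add: field_simps)
        qed
      qed
    qed
    have b2: "(1 + Sup X2)/Sup X2 \<ge> 1/(\<alpha>*m/\<beta>)"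
    proof (rule LB_sup)
      show "bdd_above X2" "X2 \<noteq> {}" "Sup X2 > 0" "\<forall>s\<in>X2. s \<ge> 0" using X2p by auto
      show "\<alpha>*m/\<beta> > 0" using al Ty Mm by simp
      show "\<forall>s\<in>X2. s/(1+s) \<le> \<alpha>*m/\<beta>"
      proof
        fix s assume s: "s \<in> X2"
        show "s/(1+s) \<le> \<alpha>*m/\<beta>"
        proof (cases "s = 0")
          case True thus ?thesis using al Ty Mm by simp
        next
          case False
          hence s0: "s > 0" using s X2_def by simp
          define r where "r = s*\<beta>/((1+s)*\<alpha>)"
          have r0: "r > 0" using s0 al Ty unfolding r_def by simp
          have eq: "T y - r *\<^sub>R y = (\<beta>/(1+s)) *\<^sub>R (Q + s *\<^sub>R (Q - P))"
          proof -
            have k: "(1/(1+s)) *\<^sub>R T y + (s/(1+s)) *\<^sub>R T y = T y" using s0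
              by (simp add: scaleR_add_left[symmetric] add_divide_distrib[symmetric])
            show ?thesis unfolding r_def P_def Q_def using s0 al Ty k by (simp add: algebra_simps field_simps)
          qed
          have inD: "Q + s *\<^sub>R (Q - P) \<in> \<Omega>" "a \<bullet> (Q + s *\<^sub>R (Q - P)) = 1" using s X2_def D_def by auto
          have z1: "T y - r *\<^sub>R y \<in> \<Omega>" unfolding eq using cone_scale[OF pc inD(1)] Ty s0 by simp
          moreover have z2: "a \<bullet> (T y - r *\<^sub>R y) > 0" unfolding eq using inD(2) Ty s0 by simp
          have ti: "Ti (T y - r *\<^sub>R y) = y - r *\<^sub>R Ti y"
            using lini inv1 by (simp add: linear_diff linear_cmul)
          have "y - r *\<^sub>R Ti y \<in> \<Omega>" "a \<bullet> (y - r *\<^sub>R Ti y) > 0" using TiC[OF z1 z2] unfolding ti by auto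
          hence "r * (1/m) \<le> 1" using key_lemma[OF pc gc op lini TiC vmi vm(2) y r0] by blast
          moreover have "\<alpha> * m + \<alpha> * (m * s) > 0" "1+s > 0" using s0 al Ty Mm by (auto intro: add_pos_nonneg)
          ultimately show ?thesis unfolding r_def using s0 al Ty Mm by (simp add: field_simps)
        qed
      qed
    qed
    have e1: "1/(\<beta>/(\<alpha>*M)) = \<alpha>*M/\<beta>" by simp
    have e2: "1/(\<alpha>*m/\<beta>) = \<beta>/(\<alpha>*m)" by simp
    have "(\<alpha>*M/\<beta>) * (\<beta>/(\<alpha>*m)) \<le> (1 + Sup X1)/Sup X1 * ((1 + Sup X2)/Sup X2)"
    proof (rule mult_mono)
      show "\<alpha>*M/\<beta> \<le> (1 + Sup X1)/Sup X1" using b1 unfolding e1 .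
      show "\<beta>/(\<alpha>*m) \<le> (1 + Sup X2)/Sup X2" using b2 unfolding e2 .
      show "0 \<le> (1 + Sup X1)/Sup X1" using X1p(3) by simp
      show "0 \<le> \<beta>/(\<alpha>*m)" using al Ty Mm by simp
    qed
    moreover have "(\<alpha>*M/\<beta>) * (\<beta>/(\<alpha>*m)) = M/m" using al Ty Mm by simp
    ultimately have "M/m \<le> (1 + Sup X1)/Sup X1 * ((1 + Sup X2)/Sup X2)" by simp
    hence "ln (M/m) \<le> ln ((1 + Sup X1)/Sup X1 * ((1 + Sup X2)/Sup X2))" using Mm by (intro ln_mono) auto
    thus ?thesis unfolding hf by simp
  qed
qed



lemma comb_eq:
  fixes y z :: "real^'n"
  assumes "\<alpha> > 0" "\<beta> > 0" "s \<ge> 0"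
  shows "(1/\<alpha>) *\<^sub>R y + s *\<^sub>R ((1/\<alpha>) *\<^sub>R y - (1/\<beta>) *\<^sub>R z) = ((1+s)/\<alpha>) *\<^sub>R (y - (s*\<alpha>/((1+s)*\<beta>)) *\<^sub>R z)"
proof -
  have k: "((1+s)/\<alpha>) * (s*\<alpha>/((1+s)*\<beta>)) = s/\<beta>" 
  proof -
    have x: "1+s > 0" using assms by simp
    have g: "\<And>x::real. x > 0 \<Longrightarrow> (x/\<alpha>) * (s*\<alpha>/(x*\<beta>)) = s/\<beta>" using assms by (simp add: field_simps)
    show ?thesis using g[OF x] .
  qed
  have "((1+s)/\<alpha>) *\<^sub>R (y - (s*\<alpha>/((1+s)*\<beta>)) *\<^sub>R z) = ((1+s)/\<alpha>) *\<^sub>R y - (s/\<beta>) *\<^sub>R z"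
    by (simp only: scaleR_right_diff_distrib scaleR_scaleR k)
  moreover have "(1/\<alpha>) *\<^sub>R y + s *\<^sub>R ((1/\<alpha>) *\<^sub>R y - (1/\<beta>) *\<^sub>R z) = ((1+s)/\<alpha>) *\<^sub>R y - (s/\<beta>) *\<^sub>R z"
    by (simp add: algebra_simps add_divide_distrib scaleR_add_left)
  ultimately show ?thesis by simp
qed

lemma UP:
  fixes \<Omega> :: "(real^'n) set" and T :: "real^'n \<Rightarrow> real^'n"
  assumes a: "a = (SOME a. good_chart \<Omega> a)"
    and pc: "pcone \<Omega>" and gc: "good_chart \<Omega> a" and op: "open \<Omega>"
    and Mm: "M \<ge> m" "m > 0"
    and y: "y \<in> \<Omega>" "a \<bullet> y > 0" and Ty: "T y \<in> \<Omega>" "a \<bullet> T y > 0"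
    and c1: "\<And>r. r \<ge> 0 \<Longrightarrow> r * M < 1 \<Longrightarrow> y - r *\<^sub>R T y \<in> \<Omega>"
    and c2: "\<And>r. r \<ge> 0 \<Longrightarrow> r < m \<Longrightarrow> T y - r *\<^sub>R y \<in> \<Omega>"
  shows "hilbert_dist \<Omega> y (T y) \<le> 1/2 * ln (M/m)"
proof -
  have M0: "M > 0" using Mm by simp
  define \<alpha> \<beta> where "\<alpha> = a \<bullet> y" and "\<beta> = a \<bullet> T y"
  have al: "\<alpha> > 0" "\<beta> > 0" using y Ty unfolding \<alpha>_def \<beta>_def by auto
  define P Q where "P = (1/\<alpha>) *\<^sub>R y" and "Q = (1/\<beta>) *\<^sub>R T y"
  show ?thesis
  proof (cases "P = Q")
    case True
    hence h0: "hilbert_dist \<Omega> y (T y) = 0" using hd_same[of \<Omega> y "T y"]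
      unfolding P_def Q_def \<alpha>_def \<beta>_def a by simp
    have "M/m \<ge> 1" using Mm by simp
    hence "ln (M/m) \<ge> 0" by simp
    thus ?thesis using h0 by simp
  next
    case False
    define D where "D = {z\<in>\<Omega>. a \<bullet> z = 1}"
    define X1 where "X1 = {s. s \<ge> 0 \<and> P + s *\<^sub>R (P - Q) \<in> D}"
    define X2 where "X2 = {t. t \<ge> 0 \<and> Q + t *\<^sub>R (Q - P) \<in> D}"
    have PO: "P \<in> \<Omega>" "a \<bullet> P = 1" using cone_scale[OF pc y(1)] al unfolding P_def \<alpha>_def by auto
    have QO: "Q \<in> \<Omega>" "a \<bullet> Q = 1" using cone_scale[OF pc Ty(1)] al unfolding Q_def \<beta>_def by auto
    note X1p = X_props[OF gc op PO QO(2) False X1_def[unfolded D_def]]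
    note X2p = X_props[OF gc op QO PO(2) False[symmetric] X2_def[unfolded D_def]]
    have hf: "hilbert_dist \<Omega> y (T y) = 1/2 * ln ((1 + Sup X1)/Sup X1 * ((1 + Sup X2)/Sup X2))"
      by (rule hd_formula[OF a P_def[unfolded \<alpha>_def] Q_def[unfolded \<beta>_def] False
            X1_def[unfolded D_def] X2_def[unfolded D_def] X1p(3) X2p(3)])
    have b1: "(1 + Sup X1)/Sup X1 \<le> 1/(\<beta>/(\<alpha>*M))"
    proof (rule UB_sup(2))
      show "bdd_above X1" "0 \<in> X1" using X1p by auto
      show "\<beta>/(\<alpha>*M) > 0" using al M0 by simp
      fix s :: real assume s0: "s \<ge> 0" and lt: "s/(1+s) < \<beta>/(\<alpha>*M)"
      define r where "r = s*\<alpha>/((1+s)*\<beta>)"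
      have r0: "r \<ge> 0" using s0 al unfolding r_def by simp
      have "\<beta> + \<beta> * s > 0" "\<alpha>*M > 0" "1+s > 0" using s0 al M0 by (auto intro: add_pos_nonneg)
      hence rM: "r * M < 1" using lt unfolding r_def by (simp add: field_simps)
      have eq: "P + s *\<^sub>R (P - Q) = ((1+s)/\<alpha>) *\<^sub>R (y - r *\<^sub>R T y)"
        unfolding r_def P_def Q_def by (rule comb_eq[OF al s0])
      have "P + s *\<^sub>R (P - Q) \<in> \<Omega>" unfolding eq
        using cone_scale[OF pc c1[OF r0 rM], of "(1+s)/\<alpha>"] s0 al by (simp add: add_nonneg_eq_0_iff)
      moreover have "a \<bullet> (P + s *\<^sub>R (P - Q)) = 1" using PO QO by (simp add: inner_add_right inner_diff_right)
      ultimately show "s \<in> X1" unfolding X1_def D_def using s0 by simp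
    qed
    have b2: "(1 + Sup X2)/Sup X2 \<le> 1/(\<alpha>*m/\<beta>)"
    proof (rule UB_sup(2))
      show "bdd_above X2" "0 \<in> X2" using X2p by auto
      show "\<alpha>*m/\<beta> > 0" using al Mm by simp
      fix s :: real assume s0: "s \<ge> 0" and lt: "s/(1+s) < \<alpha>*m/\<beta>"
      define r where "r = s*\<beta>/((1+s)*\<alpha>)"
      have r0: "r \<ge> 0" using s0 al unfolding r_def by simp
      have "\<alpha> + \<alpha> * s > 0" "\<beta> > 0" "1+s > 0" using s0 al by (auto intro: add_pos_nonneg)
      hence rM: "r < m" using lt unfolding r_def by (simp add: field_simps)
      have eq: "Q + s *\<^sub>R (Q - P) = ((1+s)/\<beta>) *\<^sub>R (T y - r *\<^sub>R y)"
        unfolding r_def P_def Q_def by (rule comb_eq[OF al(2) al(1) s0])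
      have "Q + s *\<^sub>R (Q - P) \<in> \<Omega>" unfolding eq
        using cone_scale[OF pc c2[OF r0 rM], of "(1+s)/\<beta>"] s0 al by (simp add: add_nonneg_eq_0_iff)
      moreover have "a \<bullet> (Q + s *\<^sub>R (Q - P)) = 1" using PO QO by (simp add: inner_add_right inner_diff_right)
      ultimately show "s \<in> X2" unfolding X2_def D_def using s0 by simp
    qed
    have e1: "1/(\<beta>/(\<alpha>*M)) = \<alpha>*M/\<beta>" by simp
    have e2: "1/(\<alpha>*m/\<beta>) = \<beta>/(\<alpha>*m)" by simp
    have "(1 + Sup X1)/Sup X1 * ((1 + Sup X2)/Sup X2) \<le> (\<alpha>*M/\<beta>) * (\<beta>/(\<alpha>*m))"
    proof (rule mult_mono)
      show "(1 + Sup X1)/Sup X1 \<le> \<alpha>*M/\<beta>" using b1 unfolding e1 .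
      show "(1 + Sup X2)/Sup X2 \<le> \<beta>/(\<alpha>*m)" using b2 unfolding e2 .
      show "0 \<le> (1 + Sup X2)/Sup X2" using X2p(3) by simp
      show "0 \<le> \<alpha>*M/\<beta>" using al M0 by simp
    qed
    moreover have "(\<alpha>*M/\<beta>) * (\<beta>/(\<alpha>*m)) = M/m" using al Mm by simp
    ultimately have le: "(1 + Sup X1)/Sup X1 * ((1 + Sup X2)/Sup X2) \<le> M/m" by simp
    have "0 < (1 + Sup X1)/Sup X1 * ((1 + Sup X2)/Sup X2)" using X1p(3) X2p(3) by simp
    hence "ln ((1 + Sup X1)/Sup X1 * ((1 + Sup X2)/Sup X2)) \<le> ln (M/m)" using le by (intro ln_mono) auto
    thus ?thesis unfolding hf by simp
  qed
qed



lemma inv_facts: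
  fixes A :: "real^'n^'n"
  assumes "invertible A" shows "A ** matrix_inv A = mat 1" "matrix_inv A ** A = mat 1"
proof -
  have "\<exists>A'. A ** A' = mat 1 \<and> A' ** A = mat 1" using assms unfolding invertible_def by blast
  hence "A ** matrix_inv A = mat 1 \<and> matrix_inv A ** A = mat 1"
    unfolding matrix_inv_def by (rule someI_ex)
  thus "A ** matrix_inv A = mat 1" "matrix_inv A ** A = mat 1" by auto
qed

lemma col_entry: "((A::real^'n^'m) *v axis j 1) $ i = A $ i $ j"
  by (simp add: matrix_vector_mult_basis column_def)

lemma eig_combo:
  fixes g B :: "real^'n^'n"
  assumes ev: "\<forall>j\<in>I. g *v (B *v axis j 1) = cc j *\<^sub>R (B *v axis j 1)"
    and y: "\<forall>j. j \<notin> I \<longrightarrow> y $ j = 0"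
  shows "g *v (B *v y) = B *v (\<chi> j. cc j * y $ j)"
proof -
  have col: "(g ** B) $ i $ j = cc j * B $ i $ j" if "j \<in> I" for i j
  proof -
    have "(g ** B) $ i $ j = ((g ** B) *v axis j 1) $ i" by (simp add: col_entry)
    also have "\<dots> = (g *v (B *v axis j 1)) $ i" by (simp add: matrix_vector_mul_assoc)
    also have "\<dots> = cc j * B $ i $ j" using ev that by (simp add: col_entry)
    finally show ?thesis .
  qed
  have "(g *v (B *v y)) $ i = (B *v (\<chi> j. cc j * y $ j)) $ i" for i
  proof -
    have "(g *v (B *v y)) $ i = ((g ** B) *v y) $ i" by (simp only: matrix_vector_mul_assoc)
    also have "\<dots> = (\<Sum>j\<in>UNIV. (g ** B) $ i $ j * y $ j)"
      by (simp only: matrix_vector_mult_def vec_lambda_beta)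
    also have "\<dots> = (\<Sum>j\<in>UNIV. B $ i $ j * (cc j * y $ j))"
    proof (rule sum.cong)
      fix j assume "j \<in> (UNIV::'n set)"
      show "(g ** B) $ i $ j * y $ j = B $ i $ j * (cc j * y $ j)"
        using col[of j i] y by (cases "j \<in> I") auto
    qed simp
    also have "\<dots> = (B *v (\<chi> j. cc j * y $ j)) $ i" by (simp add: matrix_vector_mult_def)
    finally show ?thesis .
  qed
  thus ?thesis by (simp add: vec_eq_iff)
qed

lemma nonzero_dir:
  fixes \<Omega> :: "(real^'n) set"
  assumes pc: "pcone \<Omega>" and Bd: "\<forall>z\<in>{z\<in>\<Omega>. a \<bullet> z = 1}. norm z \<le> B"
    and v: "v \<noteq> 0" and aw: "a \<bullet> w \<noteq> 0" and vw: "\<And>\<epsilon>. \<epsilon> > 0 \<Longrightarrow> v + \<epsilon> *\<^sub>R w \<in> \<Omega>"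
  shows "a \<bullet> v \<noteq> 0"
proof
  assume av: "a \<bullet> v = 0"
  define K where "K = \<bar>B\<bar> * \<bar>a \<bullet> w\<bar> + norm w + 1"
  have K: "K > 0" unfolding K_def by (simp add: add_nonneg_pos)
  define \<epsilon> where "\<epsilon> = norm v / (2*K)"
  have e: "\<epsilon> > 0" using v K unfolding \<epsilon>_def by simp
  define z where "z = (1/(\<epsilon> * (a \<bullet> w))) *\<^sub>R (v + \<epsilon> *\<^sub>R w)"
  have "z \<in> \<Omega>" unfolding z_def using cone_scale[OF pc vw[OF e]] e aw by simp
  moreover have "a \<bullet> z = 1" unfolding z_def using av e aw by (simp add: inner_add_right)
  ultimately have "norm z \<le> B" using Bd by auto
  moreover have "norm z = norm (v + \<epsilon> *\<^sub>R w) / (\<epsilon> * \<bar>a \<bullet> w\<bar>)" unfolding z_def using e aw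
    by (simp add: abs_mult)
  ultimately have "norm (v + \<epsilon> *\<^sub>R w) \<le> B * (\<epsilon> * \<bar>a \<bullet> w\<bar>)" using e aw by (simp add: divide_le_eq)
  also have "\<dots> \<le> \<epsilon> * (\<bar>B\<bar> * \<bar>a \<bullet> w\<bar>)" using e by (simp add: mult_right_mono mult.commute mult.left_commute)
  finally have n1: "norm (v + \<epsilon> *\<^sub>R w) \<le> \<epsilon> * (\<bar>B\<bar> * \<bar>a \<bullet> w\<bar>)" .
  have "norm v \<le> norm (v + \<epsilon> *\<^sub>R w) + norm (\<epsilon> *\<^sub>R w)"
    by (metis add_diff_cancel_right' norm_triangle_ineq4)
  also have "\<dots> \<le> \<epsilon> * (\<bar>B\<bar> * \<bar>a \<bullet> w\<bar>) + \<epsilon> * norm w" using n1 e by simp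
  also have "\<dots> < \<epsilon> * K" using e unfolding K_def by (simp add: distrib_left)
  also have "\<dots> = norm v / 2" unfolding \<epsilon>_def using K by simp
  finally show False using v by simp
qed

lemma pos_eig:
  fixes \<Omega> :: "(real^'n) set" and T :: "real^'n \<Rightarrow> real^'n"
  assumes lin: "linear T"
    and TC: "\<And>x. x \<in> \<Omega> \<Longrightarrow> a \<bullet> x > 0 \<Longrightarrow> T x \<in> \<Omega> \<and> a \<bullet> T x > 0"
    and ev: "T v = l *\<^sub>R v" and av: "a \<bullet> v > 0" and l: "l \<noteq> 0"
    and vw: "\<And>\<epsilon>. \<epsilon> > 0 \<Longrightarrow> v + \<epsilon> *\<^sub>R w \<in> \<Omega>"
  shows "l > 0"
proof (rule ccontr)
  assume "\<not> l > 0"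
  hence ln: "l < 0" using l by simp
  define A where "A = a \<bullet> v"
  define K1 where "K1 = \<bar>a \<bullet> w\<bar> + 1"
  define K2 where "K2 = \<bar>a \<bullet> T w\<bar> + 1"
  have K: "K1 > 0" "K2 > 0" unfolding K1_def K2_def by (auto simp: add_nonneg_pos)
  define Q where "Q = -l*A"
  define \<epsilon> where "\<epsilon> = min (A/(2*K1)) (Q/(2*K2))"
  have A: "A > 0" using av unfolding A_def by simp
  have "Q > 0" using ln A unfolding Q_def by (simp add: mult_neg_pos)
  hence "Q/(2*K2) > 0" using K by (intro divide_pos_pos) simp_all
  moreover have "A/(2*K1) > 0" using K A by simp
  ultimately
  have e: "\<epsilon> > 0" unfolding \<epsilon>_def by simp
  have "\<epsilon> \<le> A/(2*K1)" unfolding \<epsilon>_def by simp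
  hence "\<epsilon> * (2*K1) \<le> A" using K by (simp add: pos_le_divide_eq)
  hence e1: "\<epsilon> * K1 \<le> A/2" by simp
  have "\<epsilon> \<le> Q/(2*K2)" unfolding \<epsilon>_def by simp
  hence "\<epsilon> * (2*K2) \<le> Q" using K by (simp add: pos_le_divide_eq)
  hence e2: "\<epsilon> * K2 \<le> -l*A/2" unfolding Q_def by simp
  have "\<epsilon> * \<bar>a \<bullet> w\<bar> \<le> \<epsilon> * K1" using e unfolding K1_def by simp
  moreover have "- (\<epsilon> * \<bar>a \<bullet> w\<bar>) \<le> \<epsilon> * (a \<bullet> w)"
  proof -
    have "-\<bar>a \<bullet> w\<bar> \<le> a \<bullet> w" by simp
    hence "\<epsilon> * (-\<bar>a \<bullet> w\<bar>) \<le> \<epsilon> * (a \<bullet> w)" using e by (intro mult_left_mono) auto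
    thus ?thesis by simp
  qed
  ultimately have "a \<bullet> (v + \<epsilon> *\<^sub>R w) > 0" using e1 A unfolding A_def by (simp add: inner_add_right)
  hence "a \<bullet> T (v + \<epsilon> *\<^sub>R w) > 0" using TC vw[OF e] by blast
  moreover have "T (v + \<epsilon> *\<^sub>R w) = l *\<^sub>R v + \<epsilon> *\<^sub>R T w" using lin ev by (simp add: linear_add linear_cmul)
  ultimately have "l * A + \<epsilon> * (a \<bullet> T w) > 0" unfolding A_def by (simp add: inner_add_right)
  moreover have "\<epsilon> * (a \<bullet> T w) \<le> \<epsilon> * K2" using e unfolding K2_def by (simp add: mult_left_mono)
  moreover have "l * A < 0" using ln A by (simp add: mult_neg_pos)
  ultimately show False using e2 by linarith
qed



theorem mainTheorem12:
  fixes \<Omega> :: "(real^'n) set" and h g :: "real^'n^'n" and I :: "'n set"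
  assumes "properly_convex_domain \<Omega>"
    and "invertible h" and "I \<noteq> {}"
    and "properly_embedded (simplex_of h I) \<Omega>"
    and "is_automorphism \<Omega> g"
    and "\<forall>v\<in>simplex_vertices h I. \<exists>c. g *v v = c *\<^sub>R v"
  shows "simplex_of h I \<subseteq> Min_set \<Omega> g"
proof -
  have pc: "pcone \<Omega>" and ne: "\<Omega> \<noteq> {}" and op: "open \<Omega>" and ex: "\<exists>a. good_chart \<Omega> a"
    using assms(1) unfolding properly_convex_domain_def by auto
  define a where "a = (SOME a. good_chart \<Omega> a)"
  have gc: "good_chart \<Omega> a" using ex someI_ex unfolding a_def by metis
  obtain B where Bd: "\<forall>z\<in>{z\<in>\<Omega>. a \<bullet> z = 1}. norm z \<le> B"
    using gc unfolding good_chart_def bounded_iff by blast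
  define hi where "hi = matrix_inv h"
  note hinv = inv_facts[OF assms(2), folded hi_def]
  have hi_inj: "y = 0" if "hi *v y = 0" for y
  proof -
    have "y = (h ** hi) *v y" using hinv by simp
    also have "\<dots> = h *v (hi *v y)" by (simp add: matrix_vector_mul_assoc)
    finally show ?thesis using that by simp
  qed
  have Smem: "c *\<^sub>R (hi *v y) \<in> \<Omega>" if "c \<noteq> 0" "\<forall>i\<in>I. y $ i > 0" "\<forall>i. i \<notin> I \<longrightarrow> y $ i = 0" for c y
  proof -
    have "c *\<^sub>R (hi *v y) \<in> simplex_of h I" unfolding simplex_of_def hi_def using that by blast
    thus ?thesis using assms(4) unfolding properly_embedded_def by blast
  qed
  define v where "v i = hi *v axis i 1" for i
  have "\<forall>i\<in>I. \<exists>c. g *v v i = c *\<^sub>R v i"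
    using assms(6) unfolding simplex_vertices_def v_def hi_def by blast
  then obtain cc where cc: "\<forall>i\<in>I. g *v v i = cc i *\<^sub>R v i" by metis
  have gO: "g *v x \<in> \<Omega>" if "x \<in> \<Omega>" for x
    using assms(5) that unfolding is_automorphism_def by blast
  have gsurj: "\<exists>z\<in>\<Omega>. x = g *v z" if "x \<in> \<Omega>" for x
    using assms(5) that unfolding is_automorphism_def by (metis imageE)
  have ginvb: "invertible g" using assms(5) unfolding is_automorphism_def by blast
  define gi where "gi = matrix_inv g"
  note ginv = inv_facts[OF ginvb, folded gi_def]
  define one where "one = (\<chi> j. if j \<in> I then 1 else (0::real))"
  define w where "w = hi *v one"
  have wO: "w \<in> \<Omega>" using Smem[of 1 one] unfolding w_def one_def by simp
  have aw: "a \<bullet> w \<noteq> 0" using chart_nz[OF gc wO] .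
  have vw: "v i + \<epsilon> *\<^sub>R w \<in> \<Omega>" if "i \<in> I" "\<epsilon> > 0" for i \<epsilon>
  proof -
    have "v i + \<epsilon> *\<^sub>R w = 1 *\<^sub>R (hi *v (axis i 1 + \<epsilon> *\<^sub>R one))"
      unfolding v_def w_def by (simp add: matrix_vector_right_distrib matrix_vector_mult_scaleR)
    moreover have "\<forall>j\<in>I. (axis i 1 + \<epsilon> *\<^sub>R one) $ j > 0"
      using that unfolding one_def by (auto simp: axis_def add_nonneg_pos)
    moreover have "\<forall>j. j \<notin> I \<longrightarrow> (axis i 1 + \<epsilon> *\<^sub>R one) $ j = 0"
      using that unfolding one_def by (auto simp: axis_def)
    ultimately show ?thesis using Smem[of 1] by simp
  qed
  have v_nz: "v i \<noteq> 0" for i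
  proof
    assume "v i = 0"
    hence "axis i (1::real) = 0" using hi_inj unfolding v_def by blast
    thus False by (simp add: axis_eq_0_iff)
  qed
  have av: "a \<bullet> v i \<noteq> 0" if "i \<in> I" for i
    using nonzero_dir[OF pc Bd v_nz aw vw[OF that]] .
  define x0 where "x0 = (if a \<bullet> w > 0 then w else -w)"
  have x0: "x0 \<in> \<Omega>" "a \<bullet> x0 > 0"
    using wO aw cone_scale[OF pc wO, of "-1"] unfolding x0_def by auto
  define \<delta> where "\<delta> = (if a \<bullet> (g *v x0) > 0 then 1 else (-1::real))"
  have \<delta>01: "\<delta> * \<delta> = 1" "\<delta> \<noteq> 0" unfolding \<delta>_def by auto
  have f0: "\<delta> * (a \<bullet> (g *v x0)) > 0"
    using chart_nz[OF gc gO[OF x0(1)]] unfolding \<delta>_def by auto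
  have \<delta>C: "\<delta> * (a \<bullet> (g *v x)) > 0" if "x \<in> \<Omega>" "a \<bullet> x > 0" for x
  proof (rule ccontr)
    assume "\<not> \<delta> * (a \<bullet> (g *v x)) > 0"
    moreover have "a \<bullet> (g *v x) \<noteq> 0" using chart_nz[OF gc gO[OF that(1)]] .
    ultimately have f1: "\<delta> * (a \<bullet> (g *v x)) < 0" using \<delta>01 by (smt (verit) mult_eq_0_iff)
    define p q where "p = - (\<delta> * (a \<bullet> (g *v x)))" and "q = \<delta> * (a \<bullet> (g *v x0))"
    have pq: "p > 0" "q > 0" using f0 f1 unfolding p_def q_def by auto
    have z1: "p *\<^sub>R x0 \<in> \<Omega>" "a \<bullet> (p *\<^sub>R x0) > 0" using cone_scale[OF pc x0(1)] pq x0 by auto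
    have z2: "q *\<^sub>R x \<in> \<Omega>" "a \<bullet> (q *\<^sub>R x) > 0" using cone_scale[OF pc that(1)] pq that by auto
    have "p *\<^sub>R x0 + q *\<^sub>R x \<in> \<Omega>" using cone_add[OF pc gc z1 z2] .
    hence "a \<bullet> (g *v (p *\<^sub>R x0 + q *\<^sub>R x)) \<noteq> 0" using chart_nz[OF gc gO] by blast
    moreover have "\<delta> * (a \<bullet> (g *v (p *\<^sub>R x0 + q *\<^sub>R x))) = p * q - q * p"
      unfolding p_def q_def
      by (simp add: matrix_vector_right_distrib matrix_vector_mult_scaleR inner_add_right algebra_simps)
    ultimately show False using \<delta>01 by simp
  qed
  define T where "T x = \<delta> *\<^sub>R (g *v x)" for x
  define Ti where "Ti x = \<delta> *\<^sub>R (gi *v x)" for x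
  have lin: "linear T" unfolding T_def
    by (rule linearI) (simp_all add: matrix_vector_right_distrib matrix_vector_mult_scaleR algebra_simps)
  have lini: "linear Ti" unfolding Ti_def
    by (rule linearI) (simp_all add: matrix_vector_right_distrib matrix_vector_mult_scaleR algebra_simps)
  have inv1: "Ti (T x) = x" for x
  proof -
    have "Ti (T x) = (\<delta> * \<delta>) *\<^sub>R ((gi ** g) *v x)"
      unfolding T_def Ti_def by (simp add: matrix_vector_mult_scaleR matrix_vector_mul_assoc)
    thus ?thesis using ginv \<delta>01 by simp
  qed
  have inv2: "T (Ti x) = x" for x
  proof -
    have "T (Ti x) = (\<delta> * \<delta>) *\<^sub>R ((g ** gi) *v x)"
      unfolding T_def Ti_def by (simp add: matrix_vector_mult_scaleR matrix_vector_mul_assoc)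
    thus ?thesis using ginv \<delta>01 by simp
  qed
  have TC: "T x \<in> \<Omega> \<and> a \<bullet> T x > 0" if "x \<in> \<Omega>" "a \<bullet> x > 0" for x
    using cone_scale[OF pc gO[OF that(1)] \<delta>01(2)] \<delta>C[OF that] unfolding T_def by simp
  have TiC: "Ti x \<in> \<Omega> \<and> a \<bullet> Ti x > 0" if xx: "x \<in> \<Omega>" "a \<bullet> x > 0" for x
  proof -
    obtain z where z: "z \<in> \<Omega>" "x = g *v z" using gsurj[OF xx(1)] by blast
    have "gi *v x = z" using z ginv by (simp add: matrix_vector_mul_assoc)
    hence TiO: "Ti x \<in> \<Omega>" unfolding Ti_def using cone_scale[OF pc z(1) \<delta>01(2)] by simp
    have "a \<bullet> Ti x > 0"
    proof (rule ccontr)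
      assume "\<not> a \<bullet> Ti x > 0"
      hence "a \<bullet> (- Ti x) > 0" using chart_nz[OF gc TiO] by simp
      moreover have "- Ti x \<in> \<Omega>" using cone_scale[OF pc TiO, of "-1"] by simp
      ultimately have "a \<bullet> T (- Ti x) > 0" using TC by blast
      moreover have "T (- Ti x) = - x" using lin inv2 by (simp add: linear_neg)
      ultimately show False using xx by simp
    qed
    thus ?thesis using TiO by simp
  qed
  define lam where "lam i = \<delta> * cc i" for i
  define \<sigma> where "\<sigma> i = (if a \<bullet> v i > 0 then 1 else (-1::real))" for i
  define vt where "vt i = \<sigma> i *\<^sub>R v i" for i
  have avt: "a \<bullet> vt i > 0" if "i \<in> I" for i
    using av[OF that] unfolding vt_def \<sigma>_def by auto
  have Tvt: "T (vt i) = lam i *\<^sub>R vt i" if "i \<in> I" for i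
    using cc that unfolding T_def vt_def lam_def by (simp add: matrix_vector_mult_scaleR)
  have lam_nz: "lam i \<noteq> 0" if "i \<in> I" for i
  proof
    assume "lam i = 0"
    hence "T (vt i) = 0" using Tvt[OF that] by simp
    hence "vt i = Ti 0" using inv1[of "vt i"] by simp
    hence "vt i = 0" using lini by (simp add: linear_0)
    thus False using avt[OF that] by simp
  qed
  have vtw: "vt i + \<epsilon> *\<^sub>R (\<sigma> i *\<^sub>R w) \<in> \<Omega>" if "i \<in> I" "\<epsilon> > 0" for i \<epsilon>
  proof -
    have "vt i + \<epsilon> *\<^sub>R (\<sigma> i *\<^sub>R w) = \<sigma> i *\<^sub>R (v i + \<epsilon> *\<^sub>R w)" unfolding vt_def by (simp add: algebra_simps)
    moreover have "\<sigma> i \<noteq> 0" unfolding \<sigma>_def by simp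
    ultimately show ?thesis using cone_scale[OF pc vw[OF that]] by simp
  qed
  have lam_pos: "lam i > 0" if "i \<in> I" for i
    by (rule pos_eig[OF lin TC Tvt[OF that] avt[OF that] lam_nz[OF that] vtw[OF that]]) blast+
  define M where "M = Max (lam ` I)"
  define m where "m = Min (lam ` I)"
  have finI: "finite I" by simp
  have "M \<in> lam ` I" unfolding M_def using finI assms(3) by (intro Max_in) auto
  then obtain iM where iM: "iM \<in> I" "lam iM = M" by blast
  have "m \<in> lam ` I" unfolding m_def using finI assms(3) by (intro Min_in) auto
  then obtain im where im: "im \<in> I" "lam im = m" by blast
  have Mge: "lam i \<le> M" if "i \<in> I" for i unfolding M_def using that finI by simp
  have mle: "m \<le> lam i" if "i \<in> I" for i unfolding m_def using that finI by simp
  have m0: "m > 0" using lam_pos[OF im(1)] im(2) by simp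
  have M0: "M > 0" using lam_pos[OF iM(1)] iM(2) by simp
  have Mm: "M \<ge> m" using Mge[OF im(1)] im(2) by simp
  have hT: "hilbert_dist \<Omega> y (g *v y) = hilbert_dist \<Omega> y (T y)" for y
    unfolding T_def by (rule hd_scale2[OF \<delta>01(2), symmetric])
  have hneg: "hilbert_dist \<Omega> (- y) (g *v (- y)) = hilbert_dist \<Omega> y (g *v y)" for y
  proof -
    have "hilbert_dist \<Omega> (- y) (g *v (- y)) = hilbert_dist \<Omega> ((-1) *\<^sub>R y) ((-1) *\<^sub>R (g *v y))"
      by (simp add: matrix_vector_mult_scaleR[of g "-1" y, simplified])
    also have "\<dots> = hilbert_dist \<Omega> y ((-1) *\<^sub>R (g *v y))" by (rule hd_scale1) simp
    also have "\<dots> = hilbert_dist \<Omega> y (g *v y)" by (rule hd_scale2) simp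
    finally show ?thesis .
  qed
  have lowC: "hilbert_dist \<Omega> y (g *v y) \<ge> 1/2 * ln (M/m)" if "y \<in> \<Omega>" "a \<bullet> y > 0" for y
    unfolding hT
    using LOW[OF a_def pc gc op lin lini TC TiC inv1 Tvt[OF iM(1)] avt[OF iM(1)] Tvt[OF im(1)] avt[OF im(1)]
        lam_pos[OF iM(1)] lam_pos[OF im(1)] that] iM(2) im(2) by simp
  have low: "hilbert_dist \<Omega> y (g *v y) \<ge> 1/2 * ln (M/m)" if "y \<in> \<Omega>" for y
  proof (cases "a \<bullet> y > 0")
    case True thus ?thesis using lowC that by blast
  next
    case False
    hence "a \<bullet> (- y) > 0" using chart_nz[OF gc that] by simp
    moreover have "- y \<in> \<Omega>" using cone_scale[OF pc that, of "-1"] by simp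
    ultimately show ?thesis using lowC hneg by metis
  qed
  have upC: "hilbert_dist \<Omega> x (g *v x) \<le> 1/2 * ln (M/m)"
    if x: "x = c *\<^sub>R (hi *v yv)" "c \<noteq> 0" "\<forall>i\<in>I. yv $ i > 0" "\<forall>i. i \<notin> I \<longrightarrow> yv $ i = 0" "a \<bullet> x > 0" for x c yv
  proof -
    have xO: "x \<in> \<Omega>" using Smem[OF x(2-4)] x(1) by simp
    have ev: "\<forall>j\<in>I. g *v (hi *v axis j 1) = cc j *\<^sub>R (hi *v axis j 1)" using cc unfolding v_def .
    have Tx: "T x = c *\<^sub>R (hi *v (\<chi> j. lam j * yv $ j))"
    proof -
      have "T x = c *\<^sub>R (\<delta> *\<^sub>R (hi *v (\<chi> j. cc j * yv $ j)))"
        unfolding T_def x(1) eig_combo[OF ev x(4), symmetric] by (simp add: matrix_vector_mult_scaleR)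
      also have "\<delta> *\<^sub>R (hi *v (\<chi> j. cc j * yv $ j)) = hi *v (\<chi> j. lam j * yv $ j)"
      proof -
        have "\<delta> *\<^sub>R (\<chi> j. cc j * yv $ j) = (\<chi> j. lam j * yv $ j)" unfolding lam_def by (simp add: vec_eq_iff)
        thus ?thesis by (metis matrix_vector_mult_scaleR)
      qed
      finally show ?thesis .
    qed
    have c1: "x - r *\<^sub>R T x \<in> \<Omega>" if "r \<ge> 0" "r * M < 1" for r
    proof -
      have eq: "x - r *\<^sub>R T x = c *\<^sub>R (hi *v (\<chi> j. (1 - r * lam j) * yv $ j))"
      proof -
        have "(\<chi> j. (1 - r * lam j) * yv $ j) = yv - r *\<^sub>R (\<chi> j. lam j * yv $ j)"
          by (simp add: vec_eq_iff algebra_simps)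
        hence v: "hi *v (\<chi> j. (1 - r * lam j) * yv $ j) = hi *v (yv - r *\<^sub>R (\<chi> j. lam j * yv $ j))" by simp
        show ?thesis
          apply (subst Tx)
          apply (subst v)
          apply (simp only: x(1))
          by (simp add: matrix_vector_mult_diff_distrib matrix_vector_mult_scaleR algebra_simps)
      qed
      have "\<forall>i\<in>I. (\<chi> j. (1 - r * lam j) * yv $ j) $ i > 0"
      proof
        fix i assume i: "i \<in> I"
        have "r * lam i \<le> r * M" using Mge[OF i] that(1) by (rule mult_left_mono)
        hence "1 - r * lam i > 0" using that(2) by simp
        thus "(\<chi> j. (1 - r * lam j) * yv $ j) $ i > 0" using x(3) i by simp
      qed
      moreover have "\<forall>i. i \<notin> I \<longrightarrow> (\<chi> j. (1 - r * lam j) * yv $ j) $ i = 0" using x(4) by simp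
      ultimately show ?thesis unfolding eq using Smem[OF x(2)] by blast
    qed
    have c2: "T x - r *\<^sub>R x \<in> \<Omega>" if "r \<ge> 0" "r < m" for r
    proof -
      have eq: "T x - r *\<^sub>R x = c *\<^sub>R (hi *v (\<chi> j. (lam j - r) * yv $ j))"
      proof -
        have "(\<chi> j. (lam j - r) * yv $ j) = (\<chi> j. lam j * yv $ j) - r *\<^sub>R yv"
          by (simp add: vec_eq_iff algebra_simps)
        hence v: "hi *v (\<chi> j. (lam j - r) * yv $ j) = hi *v ((\<chi> j. lam j * yv $ j) - r *\<^sub>R yv)" by simp
        show ?thesis
          apply (subst Tx)
          apply (subst v)
          apply (simp only: x(1))
          by (simp add: matrix_vector_mult_diff_distrib matrix_vector_mult_scaleR algebra_simps)
      qed
      have "\<forall>i\<in>I. (\<chi> j. (lam j - r) * yv $ j) $ i > 0"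
      proof
        fix i assume i: "i \<in> I"
        have "lam i - r > 0" using mle[OF i] that(2) by simp
        thus "(\<chi> j. (lam j - r) * yv $ j) $ i > 0" using x(3) i by simp
      qed
      moreover have "\<forall>i. i \<notin> I \<longrightarrow> (\<chi> j. (lam j - r) * yv $ j) $ i = 0" using x(4) by simp
      ultimately show ?thesis unfolding eq using Smem[OF x(2)] by blast
    qed
    have "hilbert_dist \<Omega> x (T x) \<le> 1/2 * ln (M/m)"
      using UP[where T=T, OF a_def pc gc op Mm m0 xO x(5) conjunct1[OF TC[OF xO x(5)]] conjunct2[OF TC[OF xO x(5)]] c1 c2] by blast
    thus ?thesis unfolding hT .
  qed
  have up: "hilbert_dist \<Omega> x (g *v x) \<le> 1/2 * ln (M/m)" if xS0: "x \<in> simplex_of h I" for x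
  proof -
    obtain c yv where cy: "x = c *\<^sub>R (hi *v yv)" "c \<noteq> 0" "\<forall>i\<in>I. yv $ i > 0" "\<forall>i. i \<notin> I \<longrightarrow> yv $ i = 0"
      using xS0 unfolding simplex_of_def hi_def by blast
    have xO: "x \<in> \<Omega>" using Smem[OF cy(2-4)] cy(1) by simp
    show ?thesis
    proof (cases "a \<bullet> x > 0")
      case True show ?thesis using upC[OF cy True] .
    next
      case False
      hence "a \<bullet> (- x) > 0" using chart_nz[OF gc xO] by simp
      moreover have "- x = (- c) *\<^sub>R (hi *v yv)" using cy(1) by simp
      ultimately have "hilbert_dist \<Omega> (- x) (g *v (- x)) \<le> 1/2 * ln (M/m)"
        using upC[of "- x" "- c" yv] cy by simp
      thus ?thesis using hneg by simp
    qed
  qed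
  show ?thesis
  proof
    fix x assume xS: "x \<in> simplex_of h I"
    have xO: "x \<in> \<Omega>" using xS assms(4) unfolding properly_embedded_def by blast
    have bdd: "bdd_below ((\<lambda>y. hilbert_dist \<Omega> y (g *v y)) ` \<Omega>)"
      by (rule bdd_belowI2[where m="1/2 * ln (M/m)"]) (rule low)
    have "translation_length \<Omega> g \<le> hilbert_dist \<Omega> x (g *v x)"
      unfolding translation_length_def using bdd xO by (rule cINF_lower)
    moreover have "translation_length \<Omega> g \<ge> 1/2 * ln (M/m)"
      unfolding translation_length_def using ne low by (intro cINF_greatest) auto
    ultimately have "hilbert_dist \<Omega> x (g *v x) = translation_length \<Omega> g" using up[OF xS] by simp
    thus "x \<in> Min_set \<Omega> g" unfolding Min_set_def using xO by simp
  qed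
qed


end
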